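(* Let $G$ be a hypomatchable graph with $|V(G)|\geq 3$, and let $(H_{1},\ldots,H_{m})$ be an odd ear decomposition of $G$ such that the sequence $(|V(H_{1})|,\ldots,|V(H_{m})|)$ is lexicographically maximum among all odd ear decompositions of $G$. Write $|V(H_{1})|=2l+1$. Then for each $i$ with $2\leq i\leq m$, $|V(Q(i))|\leq 2l$, where $Q(i)=H_{i}-\bigcup_{1\leq j\leq i-1}V(H_{j})$.
   Context: A graph $H$ is hypomatchable if $H-u$ has a perfect matching for every $u\in V(H)$. An odd ear decomposition of a graph $G$ is a sequence $(H_1,\ldots,H_m)$ of pairwise edge-disjoint subgraphs of $G$ such that: (E1) $V(G)=\bigcup_{i}V(H_i)$; (E2) each $|E(H_i)|$ is odd and at least $3$; (E3) $H_1$ is a cycle; (E4) for each $2\leq i\leq m$, either $H_i$ is a path of which exactly its two endvertices belong to $\bigcup_{j<i}V(H_j)$, or $H_i$ is a cycle with exactly one vertex in $\bigcup_{j<i}V(H_j)$. (Every hypomatchable graph of order at least $3$ has an odd ear decomposition.) For $i\geq 2$, $Q(i)=H_i-\bigcup_{j<i}V(H_j)$ is a path with an even number of vertices. *)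

theory Defs
  imports Main
begin

type_synonym 'a graph = "'a set \<times> 'a set set"

definition verts :: "'a graph \<Rightarrow> 'a set" where "verts G = fst G"
definition edges :: "'a graph \<Rightarrow> 'a set set" where "edges G = snd G"

definition graph :: "'a graph \<Rightarrow> bool" where
  "graph G \<longleftrightarrow> finite (verts G) \<and>
     (\<forall>e\<in>edges G. \<exists>u v. e = {u, v} \<and> u \<noteq> v \<and> u \<in> verts G \<and> v \<in> verts G)"

definition subgraph :: "'a graph \<Rightarrow> 'a graph \<Rightarrow> bool" where
  "subgraph H G \<longleftrightarrow> graph H \<and> verts H \<subseteq> verts G \<and> edges H \<subseteq> edges G"

definition delete_vertex :: "'a graph \<Rightarrow> 'a \<Rightarrow> 'a graph" where
  "delete_vertex G u = (verts G - {u}, {e \<in> edges G. u \<notin> e})"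

definition matching :: "'a set set \<Rightarrow> bool" where
  "matching M \<longleftrightarrow> (\<forall>e\<in>M. \<forall>f\<in>M. e \<noteq> f \<longrightarrow> e \<inter> f = {})"

definition perfect_matching :: "'a graph \<Rightarrow> 'a set set \<Rightarrow> bool" where
  "perfect_matching G M \<longleftrightarrow> M \<subseteq> edges G \<and> matching M \<and> \<Union>M = verts G"

definition hypomatchable :: "'a graph \<Rightarrow> bool" where
  "hypomatchable G \<longleftrightarrow> (\<forall>u\<in>verts G. \<exists>M. perfect_matching (delete_vertex G u) M)"

definition is_path_on :: "'a graph \<Rightarrow> 'a list \<Rightarrow> bool" where
  "is_path_on H xs \<longleftrightarrow> distinct xs \<and> length xs \<ge> 2 \<and> verts H = set xs \<and>
     edges H = {{xs ! i, xs ! Suc i} | i. Suc i < length xs}"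

definition is_path :: "'a graph \<Rightarrow> bool" where
  "is_path H \<longleftrightarrow> (\<exists>xs. is_path_on H xs)"

definition is_cycle_on :: "'a graph \<Rightarrow> 'a list \<Rightarrow> bool" where
  "is_cycle_on H xs \<longleftrightarrow> distinct xs \<and> length xs \<ge> 3 \<and> verts H = set xs \<and>
     edges H = {{xs ! i, xs ! Suc i} | i. Suc i < length xs} \<union> {{last xs, hd xs}}"

definition is_cycle :: "'a graph \<Rightarrow> bool" where
  "is_cycle H \<longleftrightarrow> (\<exists>xs. is_cycle_on H xs)"

text \<open>Vertices of the earlier ears H_1,...,H_i (0-based list: Hs!0 ... Hs!(i-1)).\<close>
definition prev_verts :: "'a graph list \<Rightarrow> nat \<Rightarrow> 'a set" where
  "prev_verts Hs i = (\<Union>j<i. verts (Hs ! j))"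

text \<open>Odd ear decomposition (E1)-(E4); the list index is 0-based, so Hs!0 is H_1.\<close>
definition odd_ear_decomposition :: "'a graph \<Rightarrow> 'a graph list \<Rightarrow> bool" where
  "odd_ear_decomposition G Hs \<longleftrightarrow>
     Hs \<noteq> [] \<and>
     (\<forall>i<length Hs. subgraph (Hs ! i) G) \<and>
     (\<forall>i<length Hs. \<forall>j<length Hs. i \<noteq> j \<longrightarrow> edges (Hs ! i) \<inter> edges (Hs ! j) = {}) \<and>
     verts G = (\<Union>i<length Hs. verts (Hs ! i)) \<and>
     (\<forall>i<length Hs. odd (card (edges (Hs ! i))) \<and> card (edges (Hs ! i)) \<ge> 3) \<and>
     is_cycle (Hs ! 0) \<and>
     (\<forall>i. 1 \<le> i \<and> i < length Hs \<longrightarrow>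
        (\<exists>xs. is_path_on (Hs ! i) xs \<and> verts (Hs ! i) \<inter> prev_verts Hs i = {hd xs, last xs}) \<or>
        (is_cycle (Hs ! i) \<and> card (verts (Hs ! i) \<inter> prev_verts Hs i) = 1))"

text \<open>Sequence of vertex counts, compared in the standard lexicographic (dictionary) order
  on lists (a proper prefix is smaller).\<close>
definition vert_seq :: "'a graph list \<Rightarrow> nat list" where
  "vert_seq Hs = map (\<lambda>H. card (verts H)) Hs"

definition lex_max_oed :: "'a graph \<Rightarrow> 'a graph list \<Rightarrow> bool" where
  "lex_max_oed G Hs \<longleftrightarrow> odd_ear_decomposition G Hs \<and>
     (\<forall>Ks. odd_ear_decomposition G Ks \<longrightarrow>
        (vert_seq Hs, vert_seq Ks) \<notin> lexord {(a, b). a < b})"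

end

theory Submission
  imports Defs
begin


definition pe :: "'a list \<Rightarrow> 'a set set" where
  "pe xs = {{xs ! i, xs ! Suc i} | i. Suc i < length xs}"

definition Eg :: "'a list \<Rightarrow> 'a graph" where "Eg xs = (set xs, pe xs)"

lemma pe_Nil[simp]: "pe [] = {}" by (simp add: pe_def)
lemma pe_single[simp]: "pe [x] = {}" by (simp add: pe_def)

lemma pe_Cons2[simp]: "pe (x # y # zs) = insert {x, y} (pe (y # zs))"
proof -
  have "{{(x # y # zs) ! i, (x # y # zs) ! Suc i} | i. Suc i < length (x # y # zs)}
      = insert {x,y} {{(y # zs) ! i, (y # zs) ! Suc i} | i. Suc i < length (y # zs)}"
    apply (rule set_eqI) apply (rule iffI)
     apply clarsimp
     apply (case_tac i) apply auto[1] apply fastforce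
    apply clarsimp apply (erule disjE) apply (rule exI[of _ 0]) apply simp
    apply clarsimp apply (rule_tac x="Suc i" in exI) apply simp done
  thus ?thesis by (simp add: pe_def)
qed

lemma pe_Cons: "ys \<noteq> [] \<Longrightarrow> pe (x # ys) = insert {x, hd ys} (pe ys)"
  by (cases ys) auto

lemma pe_append: "xs \<noteq> [] \<Longrightarrow> ys \<noteq> [] \<Longrightarrow> pe (xs @ ys) = pe xs \<union> pe ys \<union> {{last xs, hd ys}}"
proof (induction xs)
  case Nil then show ?case by simp
next
  case (Cons x xs)
  show ?case
  proof (cases "xs = []")
    case True then show ?thesis using Cons by (simp add: pe_Cons)
  next
    case False
    then have "pe (x # xs @ ys) = insert {x, hd xs} (pe (xs @ ys))" by (simp add: pe_Cons)
    then show ?thesis using Cons False by (auto simp: pe_Cons)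
  qed
qed

lemma pe_rev[simp]: "pe (rev xs) = pe xs"
proof (induction xs)
  case Nil then show ?case by simp
next
  case (Cons x xs)
  show ?case
  proof (cases "xs = []")
    case True then show ?thesis by simp
  next
    case False
    have "pe (rev xs @ [x]) = pe (rev xs) \<union> {{last (rev xs), x}}"
      using pe_append[of "rev xs" "[x]"] False by simp
    also have "last (rev xs) = hd xs" using False by (simp add: last_rev)
    finally show ?thesis using Cons False by (auto simp: pe_Cons insert_commute)
  qed
qed

lemma pe_sub: "e \<in> pe xs \<Longrightarrow> e \<subseteq> set xs"
  by (auto simp: pe_def)

lemma pe_finite[simp]: "finite (pe xs)"
proof -
  have "pe xs = (\<lambda>i. {xs ! i, xs ! Suc i}) ` {i. Suc i < length xs}" by (auto simp: pe_def)
  have "finite {i. Suc i < length xs}" by (rule finite_subset[of _ "{..<length xs}"]) auto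
  thus ?thesis using \<open>pe xs = _\<close> by simp
qed

lemma card_pe: "distinct xs \<Longrightarrow> card (pe xs) = length xs - 1"
proof (induction xs)
  case Nil then show ?case by simp
next
  case (Cons x xs)
  show ?case
  proof (cases "xs = []")
    case True then show ?thesis by simp
  next
    case False
    have "{x, hd xs} \<notin> pe xs" using Cons.prems pe_sub by fastforce
    then show ?thesis using Cons False by (simp add: pe_Cons)
  qed
qed




definition wfl :: "'a list \<Rightarrow> bool" where
  "wfl hs \<longleftrightarrow> 4 \<le> length hs \<and> even (length hs) \<and> distinct (tl hs) \<and> distinct (butlast hs)"

definition wfc :: "'a list \<Rightarrow> bool" where
  "wfc ys \<longleftrightarrow> 4 \<le> length ys \<and> even (length ys) \<and> distinct (tl ys) \<and> hd ys = last ys"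

lemma tl_rev': "tl (rev xs) = rev (butlast xs)" by (metis butlast_rev rev_rev_ident)

lemma len3_split: "3 \<le> length bl \<Longrightarrow> \<exists>x y zs. bl = x # y # zs \<and> zs \<noteq> []"
  by (cases bl; cases "tl bl"; cases "tl (tl bl)") auto

lemma closing_edge_notin: "distinct bl \<Longrightarrow> 3 \<le> length bl \<Longrightarrow> {last bl, hd bl} \<notin> pe bl"
proof -
  assume d: "distinct bl" and l: "3 \<le> length bl"
  obtain x y zs where bl: "bl = x # y # zs" and zs: "zs \<noteq> []" using len3_split[OF l] by blast
  have lz: "last bl = last zs" "last zs \<in> set zs" using bl zs by simp_all
  have n1: "last zs \<noteq> y" "last zs \<noteq> x" "x \<notin> set (y # zs)" using d bl lz(2) by auto
  have "{last zs, x} \<noteq> {x, y}" using n1 by (simp add: doubleton_eq_iff)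
  moreover have "{last zs, x} \<notin> pe (y # zs)" using pe_sub[of "{last zs, x}" "y # zs"] n1(3) by blast
  ultimately show ?thesis using bl lz(1) by simp
qed

lemma wfc_bl: "wfc ys \<Longrightarrow> distinct (butlast ys) \<and> ys = butlast ys @ [hd ys] \<and> 3 \<le> length (butlast ys) \<and> hd (butlast ys) = hd ys"
proof -
  assume w: "wfc ys"
  then obtain y t where ys: "ys = y # t" and t: "t \<noteq> []" unfolding wfc_def by (cases ys; cases "tl ys") auto
  have lt: "last t = y" using w ys t unfolding wfc_def by simp
  have dt: "distinct t" using w ys unfolding wfc_def by simp
  have tt: "t = butlast t @ [y]" using lt t by (metis append_butlast_last_id)
  have "y \<notin> set (butlast t)" using dt tt by (metis distinct_append not_distinct_conv_prefix)
  then have "distinct (butlast ys)" using dt ys t by (simp add: distinct_butlast)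
  moreover have "ys = butlast ys @ [hd ys]" using ys t lt by (metis append_butlast_last_id last_ConsR list.discI list.sel(1))
  moreover have "3 \<le> length (butlast ys)" using w unfolding wfc_def by (simp; linarith)
  moreover have "hd (butlast ys) = hd ys" using ys t by simp
  ultimately show ?thesis by blast
qed

lemma card_pe_closed: "wfc ys \<Longrightarrow> card (pe ys) = length ys - 1"
proof -
  assume w: "wfc ys"
  let ?b = "butlast ys"
  have b: "distinct ?b" "ys = ?b @ [hd ys]" "3 \<le> length ?b" "hd ?b = hd ys" using wfc_bl[OF w] by auto
  have "?b \<noteq> []" using b(3) by (cases "?b") auto
  then have "pe (?b @ [hd ys]) = pe ?b \<union> {{last ?b, hd ys}}" using pe_append[of ?b "[hd ys]"] by simp
  then have "pe ys = pe ?b \<union> {{last ?b, hd ys}}" using arg_cong[of _ _ pe, OF b(2)] by simp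
  moreover have "{last ?b, hd ys} \<notin> pe ?b" using closing_edge_notin[OF b(1) b(3)] b(4) by simp
  ultimately have "card (pe ys) = card (pe ?b) + 1" by simp
  also have "\<dots> = length ys - 1" using card_pe[OF b(1)] b(3) by simp
  finally show ?thesis .
qed

lemma wf_distinct: "wfl xs \<Longrightarrow> hd xs \<noteq> last xs \<Longrightarrow> distinct xs"
proof -
  assume w: "wfl xs" and ne: "hd xs \<noteq> last xs"
  then obtain x t where xs: "xs = x # t" and t: "t \<noteq> []" unfolding wfl_def by (cases xs; cases "tl xs") auto
  have dt: "distinct t" "distinct (x # butlast t)" using w xs t unfolding wfl_def by auto
  have "x \<noteq> last t" using ne xs t by simp
  moreover have "set t = insert (last t) (set (butlast t))"
    using arg_cong[of _ _ set, OF append_butlast_last_id[OF t, symmetric]] by simp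
  ultimately have "x \<notin> set t" using dt(2) by simp
  then show ?thesis using dt xs by simp
qed

lemma wf_adj: "distinct (tl xs) \<Longrightarrow> distinct (butlast xs) \<Longrightarrow> 3 \<le> length xs \<Longrightarrow> Suc i < length xs \<Longrightarrow> xs ! i \<noteq> xs ! Suc i"
proof (cases i)
  case 0
  assume d: "distinct (butlast xs)" and l: "3 \<le> length xs"
  have "butlast xs ! 0 = xs ! 0" "butlast xs ! 1 = xs ! 1" using l by (auto simp: nth_butlast)
  moreover have "butlast xs ! 0 \<noteq> butlast xs ! 1" using d l by (simp add: nth_eq_iff_index_eq)
  ultimately show ?thesis using 0 by simp
next
  case (Suc j)
  assume d: "distinct (tl xs)" and s: "Suc i < length xs"
  have "tl xs ! j = xs ! Suc j" "tl xs ! Suc j = xs ! Suc (Suc j)" using s Suc by (auto simp: nth_tl)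
  moreover have "tl xs ! j \<noteq> tl xs ! Suc j" using d s Suc by (simp add: nth_eq_iff_index_eq)
  ultimately show ?thesis using Suc by simp
qed

lemma graph_Eg: "distinct (tl xs) \<Longrightarrow> distinct (butlast xs) \<Longrightarrow> 3 \<le> length xs \<Longrightarrow> graph (Eg xs)"
  unfolding graph_def
proof (intro conjI ballI)
  assume a: "distinct (tl xs)" "distinct (butlast xs)" "3 \<le> length xs"
  show "finite (verts (Eg xs))" by (simp add: Eg_def verts_def)
  fix e assume "e \<in> edges (Eg xs)"
  then obtain i where i: "e = {xs ! i, xs ! Suc i}" "Suc i < length xs" by (auto simp: Eg_def edges_def pe_def)
  have "xs ! i \<noteq> xs ! Suc i" using wf_adj[OF a i(2)] .
  moreover have "xs ! i \<in> verts (Eg xs)" "xs ! Suc i \<in> verts (Eg xs)" using i(2) by (simp_all add: Eg_def verts_def)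
  ultimately show "\<exists>u v. e = {u, v} \<and> u \<noteq> v \<and> u \<in> verts (Eg xs) \<and> v \<in> verts (Eg xs)" using i(1) by blast
qed

lemma wfc_wf: "wfc ys \<Longrightarrow> wfl ys"
  using wfc_bl[of ys] unfolding wfc_def wfl_def by auto

lemma wf_rev: "wfl xs \<Longrightarrow> wfl (rev xs)"
  unfolding wfl_def by (simp add: tl_rev' butlast_rev)

lemma wfc_rev: "wfc ys \<Longrightarrow> wfc (rev ys)"
proof -
  assume w: "wfc ys"
  have "distinct (butlast ys)" using wfc_bl[OF w] by simp
  then show ?thesis using w unfolding wfc_def by (simp add: tl_rev' hd_rev last_rev)
qed

lemma Eg_rev[simp]: "Eg (rev ys) = Eg ys" by (simp add: Eg_def)

lemma Rot:
  assumes w: "wfc (U @ V)" and U: "U \<noteq> []" and V: "V \<noteq> []"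
  shows "wfc (V @ tl U @ [hd V]) \<and> Eg (V @ tl U @ [hd V]) = Eg (U @ V)"
proof -
  obtain y0 U' where Ud: "U = y0 # U'" using U by (cases U) auto
  obtain v0 V' where Vd: "V = v0 # V'" using V by (cases V) auto
  have lv: "last V = y0" using w Ud V unfolding wfc_def by simp
  have d: "distinct (U' @ V)" using w Ud unfolding wfc_def by simp
  have len: "length (V @ tl U @ [hd V]) = length (U @ V)" using Ud by simp
  have "distinct (V' @ U' @ [v0])" using d Vd by auto
  then have "distinct (tl (V @ tl U @ [hd V]))" using Ud Vd by simp
  moreover have "hd (V @ tl U @ [hd V]) = last (V @ tl U @ [hd V])" using Vd by simp
  ultimately have "wfc (V @ tl U @ [hd V])" using w len unfolding wfc_def by simp
  moreover have "y0 \<in> set V" using lv V by (metis last_in_set)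
  then have "set (V @ tl U @ [hd V]) = set (U @ V)"
    using Ud V by auto
  moreover have "pe (V @ tl U @ [hd V]) = pe (U @ V)"
  proof (cases "U' = []")
    case True
    then show ?thesis using Ud V lv pe_append[of V "[hd V]"] pe_append[of "[y0]" V] by auto
  next
    case False
    have "pe (V @ U' @ [hd V]) = pe V \<union> pe (U' @ [hd V]) \<union> {{last V, hd U'}}"
      using pe_append[of V "U' @ [hd V]"] V False by simp
    also have "pe (U' @ [hd V]) = pe U' \<union> {{last U', hd V}}"
      using pe_append[of U' "[hd V]"] False by simp
    finally have 1: "pe (V @ U' @ [hd V]) = pe V \<union> pe U' \<union> {{last U', hd V}} \<union> {{y0, hd U'}}"
      using lv by auto
    have "pe (U @ V) = pe U \<union> pe V \<union> {{last U, hd V}}" using pe_append U V by blast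
    also have "pe U = insert {y0, hd U'} (pe U')" using Ud False by (simp add: pe_Cons)
    finally show ?thesis using 1 Ud False by auto
  qed
  ultimately show ?thesis by (simp add: Eg_def)
qed

lemma ROT_TO:
  assumes w: "wfc Y0" and a: "a \<in> set Y0"
  shows "\<exists>Y. wfc Y \<and> Eg Y = Eg Y0 \<and> hd Y = a"
proof -
  obtain i where i: "i < length Y0" "Y0 ! i = a" using a by (metis in_set_conv_nth)
  show ?thesis
  proof (cases i)
    case 0
    then show ?thesis using w i by (intro exI[of _ Y0]) (simp add: hd_conv_nth)
  next
    case (Suc j)
    let ?U = "take i Y0" and ?V = "drop i Y0"
    have "?U \<noteq> []" "?V \<noteq> []" using i Suc by auto
    moreover have "hd ?V = a" using i by (simp add: hd_drop_conv_nth)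
    ultimately show ?thesis using Rot[of ?U ?V] w by (intro exI[of _ "?V @ tl ?U @ [hd ?V]"]) simp
  qed
qed




definition U :: "'a graph list \<Rightarrow> 'a set" where "U Ks = \<Union> (verts ` set Ks)"
definition EU :: "'a graph list \<Rightarrow> 'a set set" where "EU Ks = \<Union> (edges ` set Ks)"

lemma U_simps[simp]: "U [] = {}" "U (Ks @ Ls) = U Ks \<union> U Ls" "U (K # Ks) = verts K \<union> U Ks"
  by (auto simp: U_def)
lemma EU_simps[simp]: "EU [] = {}" "EU (Ks @ Ls) = EU Ks \<union> EU Ls" "EU (K # Ks) = edges K \<union> EU Ks"
  by (auto simp: EU_def)

lemma verts_Eg[simp]: "verts (Eg xs) = set xs" and edges_Eg[simp]: "edges (Eg xs) = pe xs"
  by (simp_all add: Eg_def verts_def edges_def)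

definition gear :: "'a graph \<Rightarrow> bool" where
  "gear H \<longleftrightarrow> graph H \<and> odd (card (edges H)) \<and> 3 \<le> card (edges H)"

definition att :: "'a set \<Rightarrow> 'a graph \<Rightarrow> bool" where
  "att S H \<longleftrightarrow> (\<exists>xs. is_path_on H xs \<and> verts H \<inter> S = {hd xs, last xs}) \<or>
     (is_cycle H \<and> card (verts H \<inter> S) = 1)"

definition ear :: "'a set \<Rightarrow> 'a list \<Rightarrow> bool" where
  "ear S hs \<longleftrightarrow> wfl hs \<and> set hs \<inter> S = {hd hs, last hs}"

inductive okl :: "'a graph list \<Rightarrow> bool" where
  one: "gear H \<Longrightarrow> is_cycle H \<Longrightarrow> okl [H]"
| snoc: "okl Ks \<Longrightarrow> gear H \<Longrightarrow> edges H \<inter> EU Ks = {} \<Longrightarrow> att (U Ks) H \<Longrightarrow> okl (Ks @ [H])"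

lemma okl_ne: "okl Ks \<Longrightarrow> Ks \<noteq> []"
  by (induction rule: okl.induct) auto

lemma okl_snocD:
  assumes "okl (Ks @ [H])" "Ks \<noteq> []"
  shows "okl Ks \<and> gear H \<and> edges H \<inter> EU Ks = {} \<and> att (U Ks) H"
  using assms by (cases rule: okl.cases) auto

lemma okl_prefix: "okl (As @ Bs) \<Longrightarrow> As \<noteq> [] \<Longrightarrow> okl As"
proof (induction Bs rule: rev_induct)
  case Nil then show ?case by simp
next
  case (snoc x xs)
  then show ?case using okl_snocD[of "As @ xs" x] by simp
qed

lemma okl_hd: "okl Ks \<Longrightarrow> is_cycle (Ks ! 0) \<and> gear (Ks ! 0)"
proof (induction rule: okl.induct)
  case (one H) then show ?case by simp
next
  case (snoc Ks H) then show ?case using okl_ne[OF snoc(1)] by (simp add: nth_append)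
qed

lemma okl_gear: "okl Ks \<Longrightarrow> H \<in> set Ks \<Longrightarrow> gear H"
  by (induction rule: okl.induct) auto

lemma att_mono: "att S H \<Longrightarrow> verts H \<inter> S2 = verts H \<inter> S \<Longrightarrow> att S2 H"
  unfolding att_def by simp

lemma prefix_replace:
  assumes "okl (As @ Bs)" "As \<noteq> []" "okl As'" "U As \<subseteq> U As'" "(U As' - U As) \<inter> U Bs = {}"
    "EU As' \<inter> EU Bs = {}"
  shows "okl (As' @ Bs)"
  using assms
proof (induction Bs rule: rev_induct)
  case Nil then show ?case by simp
next
  case (snoc B Bs)
  have d: "okl (As @ Bs) \<and> gear B \<and> edges B \<inter> EU (As @ Bs) = {} \<and> att (U (As @ Bs)) B"
    using okl_snocD[of "As @ Bs" B] snoc.prems by simp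
  have ih: "okl (As' @ Bs)" using snoc.IH d snoc.prems by auto
  have e: "edges B \<inter> EU (As' @ Bs) = {}" using d snoc.prems(6) by auto
  have "verts B \<inter> U (As' @ Bs) = verts B \<inter> U (As @ Bs)" using snoc.prems(4,5) by auto
  then have "att (U (As' @ Bs)) B" using att_mono d by metis
  then show ?case using okl.snoc[OF ih _ e] d by simp
qed

lemma seed_append:
  assumes "okl Ks" "okl L" "U L \<inter> U Ks = {w}" "w \<in> verts (Ks ! 0)" "EU L \<inter> EU Ks = {}"
  shows "okl (L @ Ks)"
  using assms
proof (induction rule: okl.induct)
  case (one H)
  have "verts H \<inter> U L = {w}" using one.prems by auto
  then have "att (U L) H" using one.hyps unfolding att_def by simp
  then show ?case using okl.snoc[OF one.prems(1) one.hyps(1)] one.prems by auto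
next
  case (snoc Ks H)
  have ne: "Ks \<noteq> []" using okl_ne[OF snoc.hyps(1)] .
  have w0: "w \<in> verts (Ks ! 0)" using snoc.prems ne by (simp add: nth_append)
  have wK: "w \<in> U Ks" using w0 ne by (auto simp: U_def)
  have "U L \<inter> U Ks = {w}" using snoc.prems wK by auto
  then have ih: "okl (L @ Ks)" using snoc.IH snoc.prems w0 by auto
  have "verts H \<inter> U (L @ Ks) = verts H \<inter> U Ks" using snoc.prems(2) wK by auto
  then have "att (U (L @ Ks)) H" using att_mono snoc.hyps(4) by metis
  moreover have "edges H \<inter> EU (L @ Ks) = {}" using snoc.hyps(3) snoc.prems(4) by auto
  ultimately show ?case using okl.snoc[OF ih snoc.hyps(2)] by simp
qed

lemma is_path_on_pe: "is_path_on H xs \<longleftrightarrow> distinct xs \<and> 2 \<le> length xs \<and> verts H = set xs \<and> edges H = pe xs"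
  unfolding is_path_on_def pe_def by simp

lemma is_cycle_on_pe: "is_cycle_on H xs \<longleftrightarrow> distinct xs \<and> 3 \<le> length xs \<and> verts H = set xs \<and> edges H = pe xs \<union> {{last xs, hd xs}}"
  unfolding is_cycle_on_def pe_def by simp

lemma card_pe_wf: "wfl hs \<Longrightarrow> card (pe hs) = length hs - 1"
proof (cases "hd hs = last hs")
  case True
  assume "wfl hs" then have "wfc hs" using True unfolding wfl_def wfc_def by simp
  then show ?thesis using card_pe_closed by blast
next
  case False
  assume "wfl hs" then show ?thesis using wf_distinct False card_pe by blast
qed

lemma gear_Eg: "wfl hs \<Longrightarrow> gear (Eg hs)"
  unfolding gear_def using card_pe_wf[of hs] graph_Eg[of hs] unfolding wfl_def
  by (auto simp: wfl_def)

lemma cycle_Eg: "wfc ys \<Longrightarrow> is_cycle (Eg ys)"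
proof -
  assume w: "wfc ys"
  let ?b = "butlast ys"
  have b: "distinct ?b" "ys = ?b @ [hd ys]" "3 \<le> length ?b" "hd ?b = hd ys" using wfc_bl[OF w] by auto
  have ne: "?b \<noteq> []" using b(3) by (cases "?b") auto
  have "pe (?b @ [hd ys]) = pe ?b \<union> {{last ?b, hd ys}}" using pe_append[of ?b "[hd ys]"] ne by simp
  then have pe: "pe ys = pe ?b \<union> {{last ?b, hd ?b}}" using arg_cong[of _ _ pe, OF b(2)] b(4) by simp
  have "set (?b @ [hd ys]) = set ?b" using b(4) ne by (metis hd_in_set Un_insert_right append_Nil2 insert_absorb list.set(2) set_append)
  then have st: "set ys = set ?b" using arg_cong[of _ _ set, OF b(2)] by simp
  have "is_cycle_on (Eg ys) ?b" unfolding is_cycle_on_pe using b pe st by simp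
  then show ?thesis unfolding is_cycle_def by blast
qed

lemma okl_single: "wfc ys \<Longrightarrow> okl [Eg ys]"
  using okl.one[OF gear_Eg[OF wfc_wf] cycle_Eg] by blast

lemma ear_snoc:
  assumes "okl Ks" "ear (U Ks) hs" "pe hs \<inter> EU Ks = {}"
  shows "okl (Ks @ [Eg hs])"
proof -
  have w: "wfl hs" and s: "set hs \<inter> U Ks = {hd hs, last hs}" using assms(2) unfolding ear_def by auto
  have "att (U Ks) (Eg hs)"
  proof (cases "hd hs = last hs")
    case True
    then have "wfc hs" using w unfolding wfl_def wfc_def by simp
    have "is_cycle (Eg hs)" using cycle_Eg[OF \<open>wfc hs\<close>] .
    then show ?thesis using s True unfolding att_def by simp
  next
    case False
    then have "distinct hs" using wf_distinct w by blast
    then have "is_path_on (Eg hs) hs" using w unfolding is_path_on_pe wfl_def by simp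
    then show ?thesis using s unfolding att_def by auto
  qed
  then show ?thesis using okl.snoc[OF assms(1) gear_Eg[OF w]] assms(3) by simp
qed

lemma cycle_wfc:
  assumes "gear H" "is_cycle H"
  shows "\<exists>Y. H = Eg Y \<and> wfc Y"
proof -
  obtain cs where c: "is_cycle_on H cs" using assms(2) unfolding is_cycle_def by blast
  then have c': "distinct cs" "3 \<le> length cs" "verts H = set cs" "edges H = pe cs \<union> {{last cs, hd cs}}"
    unfolding is_cycle_on_pe by auto
  have ne: "cs \<noteq> []" using c' by auto
  have "{last cs, hd cs} \<notin> pe cs" using closing_edge_notin c' by blast
  then have "card (edges H) = length cs" using c' card_pe[of cs] by simp
  then have ev: "even (length (cs @ [hd cs]))" using assms(1) unfolding gear_def by simp
  have pe: "pe (cs @ [hd cs]) = edges H" using pe_append[of cs "[hd cs]"] ne c' by simp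
  have st: "set (cs @ [hd cs]) = verts H" using ne c' hd_in_set[OF ne] by (simp add: insert_absorb)
  have "distinct (tl (cs @ [hd cs]))" using c' ne by (cases cs) auto
  then have "wfc (cs @ [hd cs])" using ev c' ne unfolding wfc_def by simp
  moreover have "H = Eg (cs @ [hd cs])" using pe st by (simp add: Eg_def verts_def edges_def)
  ultimately show ?thesis by blast
qed

lemma att_ear:
  assumes "gear H" "att S H"
  shows "\<exists>hs. H = Eg hs \<and> ear S hs"
  using assms(2) unfolding att_def
proof (elim disjE exE conjE)
  fix xs assume p: "is_path_on H xs" and s: "verts H \<inter> S = {hd xs, last xs}"
  then have p': "distinct xs" "2 \<le> length xs" "verts H = set xs" "edges H = pe xs"
    unfolding is_path_on_pe by auto
  have "card (edges H) = length xs - 1" using card_pe p' by simp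
  then have cl: "odd (length xs - 1)" "3 \<le> length xs - 1" using assms(1) unfolding gear_def by simp_all
  then have "4 \<le> length xs" "even (length xs)" by (linarith, cases "length xs") auto
  then have "wfl xs" using p' unfolding wfl_def by (simp add: distinct_butlast distinct_tl)
  moreover have "H = Eg xs" using p' by (simp add: Eg_def verts_def edges_def prod_eq_iff)
  ultimately show ?thesis using s p' unfolding ear_def by auto
next
  assume c: "is_cycle H" and s: "card (verts H \<inter> S) = 1"
  obtain Y0 where Y0: "H = Eg Y0" "wfc Y0" using cycle_wfc[OF assms(1) c] by blast
  obtain w where w: "verts H \<inter> S = {w}" using s by (meson card_1_singletonE)
  then have "w \<in> set Y0" using Y0 by auto
  then obtain Y where Y: "wfc Y" "Eg Y = Eg Y0" "hd Y = w" using ROT_TO[OF Y0(2)] by blast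
  have "set Y = set Y0" using arg_cong[of _ _ verts, OF Y(2)] by simp
  then have "set Y \<inter> S = {hd Y, last Y}" using w Y Y0 unfolding wfc_def by auto
  then show ?thesis using Y Y0 wfc_wf unfolding ear_def by metis
qed




lemma disj_by_card: "finite A \<Longrightarrow> finite B \<Longrightarrow> card (A \<union> B) = card A + card B \<Longrightarrow> A \<inter> B = {}"
  using card_Un_Int[of A B] by (simp add: card_eq_0_iff)

lemma SC:
  assumes wY: "wfc Y" and Y: "Y = a # m @ b # w" and ab: "a \<noteq> b" and wx: "wfl xs"
    and hx: "hd xs = a" and lx: "last xs = b" and sx: "set xs \<inter> set Y = {a, b}"
    and ex: "pe xs \<inter> pe Y = {}"
  shows "\<exists>As r. okl As \<and> U As = set Y \<union> set xs \<and> EU As \<subseteq> pe Y \<union> pe xs \<and> As ! 0 = Eg (xs @ r) \<and> wfc (xs @ r)"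
proof -
  have dY: "distinct (m @ b # w)" using wY Y unfolding wfc_def by simp
  have lY: "last (b # w) = a" using wY Y unfolding wfc_def by simp
  have wne: "w \<noteq> []" using lY ab by auto
  have lw: "last w = a" using lY wne by simp
  have aw: "a \<in> set w" using lw wne last_in_set by fastforce
  have am: "a \<notin> set m" "b \<notin> set m" "b \<notin> set w" "distinct w" "distinct m" "set m \<inter> set w = {}"
    using dY aw by auto
  have dx: "distinct xs" using wf_distinct[OF wx] hx lx ab by simp
  have xne: "xs \<noteq> []" "length xs \<ge> 4" "even (length xs)" using wx unfolding wfl_def by auto
  have mx: "set m \<inter> set xs = {}" "set w \<inter> set xs \<subseteq> {a}" using sx Y am by auto
  have atl: "a \<notin> set (tl xs)" using dx hx xne by (cases xs) auto
  have stl: "set (tl xs) \<subseteq> set xs" by (cases xs) auto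
  let ?al = "a # m @ [b]" and ?be = "b # w"
  have Yal: "Y = ?al @ w" using Y by simp
  have peY: "pe Y = pe ?al \<union> pe ?be"
    using pe_append[of ?al w] wne Yal pe_Cons[OF wne, of b] by auto
  have dal: "distinct ?al" using am ab by simp
  have dbe: "distinct ?be" using am by simp
  have "card (pe Y) = length Y - 1" using card_pe_closed[OF wY] .
  also have "\<dots> = card (pe ?al) + card (pe ?be)" using card_pe[OF dal] card_pe[OF dbe] Y by simp
  finally have disab: "pe ?al \<inter> pe ?be = {}" using disj_by_card[of "pe ?al" "pe ?be"] peY by simp
  have evY: "even (length m + length w)" using wY Y unfolding wfc_def by simp
  have lenxs: "length xs = Suc (length (tl xs))" using xne by simp
  show ?thesis
  proof (cases "odd (length m)")
    case True
    let ?r = "rev m @ [a]"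
    let ?D = "xs @ ?r"
    have "distinct (tl xs @ ?r)" using dx mx atl am stl by (auto simp: distinct_tl)
    then have dD: "distinct (tl ?D)" using xne by simp
    have "length ?D \<ge> 4" "even (length ?D)" using xne True by auto
    moreover have "hd ?D = last ?D" using hx xne by simp
    ultimately have wD: "wfc ?D" using dD unfolding wfc_def by simp
    have h1: "pe ?D = pe xs \<union> pe ?r \<union> {{b, hd ?r}}" using pe_append[of xs ?r] xne lx by simp
    have h2a: "pe (b # ?r) = pe ?al" using pe_rev[of ?al] by simp
    have h2: "pe ?r \<union> {{b, hd ?r}} = pe ?al" using h2a pe_Cons[of ?r b] by auto
    have peD: "pe ?D = pe xs \<union> pe ?al" using h1 h2 by auto
    have sD: "set ?D = set xs \<union> set m \<union> {a}" by auto
    show ?thesis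
    proof (cases "length w = 1")
      case True
      then have "w = [a]" using lw wne by (cases w) auto
      then have "U [Eg ?D] = set Y \<union> set xs" using Y sD sx by auto
      moreover have "EU [Eg ?D] \<subseteq> pe Y \<union> pe xs" using peD peY by auto
      ultimately show ?thesis using okl_single[OF wD] wD by (intro exI[of _ "[Eg ?D]"] exI[of _ ?r]) simp
    next
      case False
      have "odd (length w)" using evY \<open>odd (length m)\<close> by simp
      then have lw3: "length w \<ge> 3" using False wne by (simp; presburger)
      have "wfl ?be" unfolding wfl_def using lw3 \<open>odd (length w)\<close> am by (auto simp: distinct_butlast dest: in_set_butlastD)
      moreover have "set ?be \<inter> U [Eg ?D] = {hd ?be, last ?be}" using sD lw aw mx am sx Y by auto
      ultimately have "ear (U [Eg ?D]) ?be" unfolding ear_def by simp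
      moreover have "pe ?be \<inter> EU [Eg ?D] = {}" using peD disab ex peY by auto
      ultimately have ok: "okl [Eg ?D, Eg ?be]" using ear_snoc[OF okl_single[OF wD]] by simp
      have "U [Eg ?D, Eg ?be] = set Y \<union> set xs" using Y sD by auto
      moreover have "EU [Eg ?D, Eg ?be] \<subseteq> pe Y \<union> pe xs" using peD peY by auto
      ultimately show ?thesis using ok wD by (intro exI[of _ "[Eg ?D, Eg ?be]"] exI[of _ ?r]) simp
    qed
  next
    case False
    let ?D = "xs @ w"
    have "distinct (tl xs @ w)" using dx mx atl am stl by (auto simp: distinct_tl)
    then have dD: "distinct (tl ?D)" using xne by simp
    have "even (length w)" using evY False by simp
    then have "length ?D \<ge> 4" "even (length ?D)" using xne by auto
    moreover have "hd ?D = last ?D" using hx xne lw wne by simp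
    ultimately have wD: "wfc ?D" using dD unfolding wfc_def by simp
    have peD: "pe ?D = pe xs \<union> pe ?be" using pe_append[of xs w] xne lx wne pe_Cons[OF wne, of b] by auto
    have sD: "set ?D = set xs \<union> set w" by auto
    show ?thesis
    proof (cases "m = []")
      case True
      then have "U [Eg ?D] = set Y \<union> set xs" using Y sD sx by auto
      moreover have "EU [Eg ?D] \<subseteq> pe Y \<union> pe xs" using peD peY by auto
      ultimately show ?thesis using okl_single[OF wD] wD by (intro exI[of _ "[Eg ?D]"] exI[of _ w]) simp
    next
      case mne: False
      have "length m \<ge> 2" proof -
        have "length m \<noteq> 0" using mne by simp
        then show ?thesis using False by presburger
      qed
      then have "wfl ?al" unfolding wfl_def using False dal by (simp add: distinct_butlast distinct_tl)
      moreover have "set ?al \<inter> U [Eg ?D] = {hd ?al, last ?al}" using sD mx am sx Y by auto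
      ultimately have "ear (U [Eg ?D]) ?al" unfolding ear_def by simp
      moreover have "pe ?al \<inter> EU [Eg ?D] = {}" using peD disab ex peY by auto
      ultimately have ok: "okl [Eg ?D, Eg ?al]" using ear_snoc[OF okl_single[OF wD]] by simp
      have "U [Eg ?D, Eg ?al] = set Y \<union> set xs" using Y sD by auto
      moreover have "EU [Eg ?D, Eg ?al] \<subseteq> pe Y \<union> pe xs" using peD peY by auto
      ultimately show ?thesis using ok wD by (intro exI[of _ "[Eg ?D, Eg ?al]"] exI[of _ w]) simp
    qed
  qed
qed




definition RES :: "'a graph list \<Rightarrow> 'a list \<Rightarrow> 'a graph list \<Rightarrow> bool" where
  "RES Hs xs Ks \<longleftrightarrow> (\<exists>r. okl Ks \<and> U Ks = U Hs \<union> set xs \<and> EU Ks \<subseteq> EU Hs \<union> pe xs \<and>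
      Ks ! 0 = Eg (xs @ r) \<and> wfc (xs @ r))"

definition PA :: "'a graph list \<Rightarrow> bool" where
  "PA Hs \<longleftrightarrow> (\<forall>w\<in>U Hs. \<exists>Ks. okl Ks \<and> U Ks = U Hs \<and> EU Ks \<subseteq> EU Hs \<and> w \<in> verts (Ks ! 0))"

definition PB :: "'a graph list \<Rightarrow> bool" where
  "PB Hs \<longleftrightarrow> (\<forall>xs. ear (U Hs) xs \<longrightarrow> pe xs \<inter> EU Hs = {} \<longrightarrow> (\<exists>Ks. RES Hs xs Ks))"

lemma flip:
  assumes w: "wfc (rev xs @ r)" and ne: "xs \<noteq> []" and hl: "hd xs \<noteq> last xs"
  shows "\<exists>r'. wfc (xs @ r') \<and> Eg (xs @ r') = Eg (rev xs @ r)"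
proof -
  have w1: "wfc (rev r @ xs)" using wfc_rev[OF w] by simp
  have e1: "Eg (rev r @ xs) = Eg (rev xs @ r)" using Eg_rev[of "rev xs @ r"] by simp
  have rne: "rev r \<noteq> []"
  proof
    assume "rev r = []"
    then have "wfc (rev xs)" using w by simp
    then show False using hl ne unfolding wfc_def by (simp add: hd_rev last_rev)
  qed
  show ?thesis using Rot[OF w1 rne ne] e1 by metis
qed

lemma RES_rev:
  assumes "RES Hs (rev xs) Ks" "xs \<noteq> []" "hd xs \<noteq> last xs"
  shows "RES Hs xs Ks"
proof -
  obtain r where r: "okl Ks" "U Ks = U Hs \<union> set xs" "EU Ks \<subseteq> EU Hs \<union> pe xs"
    "Ks ! 0 = Eg (rev xs @ r)" "wfc (rev xs @ r)" using assms(1) unfolding RES_def by auto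
  obtain r' where "wfc (xs @ r')" "Eg (xs @ r') = Eg (rev xs @ r)" using flip[OF r(5) assms(2,3)] by blast
  then show ?thesis using r unfolding RES_def by metis
qed

lemma ear_rev: "ear S xs \<Longrightarrow> xs \<noteq> [] \<Longrightarrow> ear S (rev xs)"
  unfolding ear_def using wf_rev by (auto simp: hd_rev last_rev)

lemma ear_ne: "ear S xs \<Longrightarrow> xs \<noteq> []"
  unfolding ear_def wfl_def by auto

lemma C0:
  assumes ok: "okl Hs" and pa: "PA Hs" and e: "ear (U Hs) xs" and c: "hd xs = last xs"
    and ex: "pe xs \<inter> EU Hs = {}"
  shows "\<exists>Ks. RES Hs xs Ks"
proof -
  have wx: "wfc xs" using e c unfolding ear_def wfl_def wfc_def by simp
  have s: "set xs \<inter> U Hs = {hd xs}" using e c unfolding ear_def by simp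
  then have "hd xs \<in> U Hs" by auto
  then obtain Ks0 where K: "okl Ks0" "U Ks0 = U Hs" "EU Ks0 \<subseteq> EU Hs" "hd xs \<in> verts (Ks0 ! 0)"
    using pa unfolding PA_def by blast
  have "U [Eg xs] \<inter> U Ks0 = {hd xs}" using s K by simp
  moreover have "EU [Eg xs] \<inter> EU Ks0 = {}" using ex K by auto
  ultimately have ok2: "okl ([Eg xs] @ Ks0)" using seed_append[OF K(1) okl_single[OF wx] _ K(4)] by blast
  have "RES Hs xs ([Eg xs] @ Ks0)" unfolding RES_def
    using ok2 K wx by (intro exI[of _ "[]"]) auto
  then show ?thesis by blast
qed

lemma base:
  assumes g: "gear H" and c: "is_cycle H"
  shows "PA [H] \<and> PB [H]"
proof
  have ok: "okl [H]" using okl.one[OF g c] .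
  show pa: "PA [H]" unfolding PA_def using ok by (intro ballI exI[of _ "[H]"]) simp
  show "PB [H]" unfolding PB_def
  proof (intro allI impI)
    fix xs assume e: "ear (U [H]) xs" and ex: "pe xs \<inter> EU [H] = {}"
    show "\<exists>Ks. RES [H] xs Ks"
    proof (cases "hd xs = last xs")
      case True then show ?thesis using C0[OF ok pa e True ex] by blast
    next
      case False
      let ?a = "hd xs" and ?b = "last xs"
      obtain Y0 where Y0: "H = Eg Y0" "wfc Y0" using cycle_wfc[OF g c] by blast
      have sx: "set xs \<inter> set Y0 = {?a, ?b}" using e Y0 unfolding ear_def by simp
      then obtain Y where Y: "wfc Y" "Eg Y = Eg Y0" "hd Y = ?a" using ROT_TO[OF Y0(2)] by blast
      have sY: "set Y = set Y0" "pe Y = pe Y0" using arg_cong[of _ _ verts, OF Y(2)] arg_cong[of _ _ edges, OF Y(2)] by simp_all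
      have Yne: "Y \<noteq> []" using Y unfolding wfc_def by auto
      then have Yc: "Y = ?a # tl Y" using Y(3) by (metis list.collapse)
      have "?b \<in> set Y" using sx sY by auto
      then have "?b \<in> set (tl Y)" using Yc False by (metis set_ConsD)
      then obtain m w where "tl Y = m @ ?b # w" by (meson split_list)
      then have Ysp: "Y = ?a # m @ ?b # w" using Yc by simp
      have wx: "wfl xs" using e unfolding ear_def by simp
      obtain As r where As: "okl As" "U As = set Y \<union> set xs" "EU As \<subseteq> pe Y \<union> pe xs"
        "As ! 0 = Eg (xs @ r)" "wfc (xs @ r)"
        using SC[OF Y(1) Ysp False wx refl refl] sx sY ex Y0 by auto
      have "RES [H] xs As" unfolding RES_def using As sY Y0 by (intro exI[of _ r]) auto
      then show ?thesis by blast
    qed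
  qed
qed

lemma L_A:
  assumes ok: "okl (Hs' @ [H])" and ne: "Hs' \<noteq> []" and pa: "PA Hs'" and pb: "PB Hs'"
  shows "PA (Hs' @ [H])"
  unfolding PA_def
proof
  have d: "okl Hs'" "gear H" "edges H \<inter> EU Hs' = {}" "att (U Hs') H" using okl_snocD[OF ok ne] by auto
  obtain hs where hs: "H = Eg hs" "ear (U Hs') hs" using att_ear[OF d(2) d(4)] by blast
  fix w assume w: "w \<in> U (Hs' @ [H])"
  show "\<exists>Ks. okl Ks \<and> U Ks = U (Hs' @ [H]) \<and> EU Ks \<subseteq> EU (Hs' @ [H]) \<and> w \<in> verts (Ks ! 0)"
  proof (cases "w \<in> U Hs'")
    case True
    then obtain Ks0 where K: "okl Ks0" "U Ks0 = U Hs'" "EU Ks0 \<subseteq> EU Hs'" "w \<in> verts (Ks0 ! 0)"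
      using pa unfolding PA_def by blast
    have "okl (Ks0 @ [H])" using prefix_replace[OF ok ne K(1)] K d(3) by auto
    moreover have "(Ks0 @ [H]) ! 0 = Ks0 ! 0" using okl_ne[OF K(1)] by (simp add: nth_append)
    ultimately show ?thesis using K by (intro exI[of _ "Ks0 @ [H]"]) auto
  next
    case False
    then have "w \<in> set hs" using w hs by simp
    have "pe hs \<inter> EU Hs' = {}" using d(3) hs by simp
    then obtain Ks r where K: "okl Ks" "U Ks = U Hs' \<union> set hs" "EU Ks \<subseteq> EU Hs' \<union> pe hs"
      "Ks ! 0 = Eg (hs @ r)" using pb hs(2) unfolding PB_def RES_def by blast
    show ?thesis using K hs \<open>w \<in> set hs\<close> by (intro exI[of _ Ks]) auto
  qed
qed




lemma okl_disj: "okl (As @ Bs) \<Longrightarrow> EU As \<inter> EU Bs = {}"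
proof (induction Bs rule: rev_induct)
  case Nil then show ?case by simp
next
  case (snoc B Bs)
  show ?case
  proof (cases "As @ Bs = []")
    case True then show ?thesis by simp
  next
    case False
    then have "okl (As @ Bs) \<and> edges B \<inter> EU (As @ Bs) = {}" using okl_snocD[of "As @ Bs" B] snoc.prems by simp
    then show ?thesis using snoc.IH by auto
  qed
qed

lemma C1:
  assumes ok: "okl (Hs' @ [H])" and ne: "Hs' \<noteq> []" and pb: "PB Hs'"
    and hs: "H = Eg hs" "ear (U Hs') hs"
    and ex: "ear (U (Hs' @ [H])) xs" "pe xs \<inter> EU (Hs' @ [H]) = {}"
    and ab: "hd xs \<in> U Hs'" "last xs \<in> U Hs'"
  shows "\<exists>Ks. RES (Hs' @ [H]) xs Ks"
proof -
  have d: "okl Hs'" "gear H" "edges H \<inter> EU Hs' = {}" using okl_snocD[OF ok ne] by auto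
  have sx: "set xs \<inter> (U Hs' \<union> set hs) = {hd xs, last xs}" using ex hs unfolding ear_def by simp
  have "ear (U Hs') xs" using ex(1) sx ab unfolding ear_def by auto
  moreover have "pe xs \<inter> EU Hs' = {}" using ex(2) by auto
  ultimately obtain Ks0 r where K: "okl Ks0" "U Ks0 = U Hs' \<union> set xs" "EU Ks0 \<subseteq> EU Hs' \<union> pe xs"
    "Ks0 ! 0 = Eg (xs @ r)" "wfc (xs @ r)" using pb unfolding PB_def RES_def by blast
  have "(U Ks0 - U Hs') \<inter> U [H] = {}" using K(2) sx hs ab by auto
  moreover have "EU Ks0 \<inter> EU [H] = {}" using K(3) d(3) ex(2) hs by auto
  ultimately have ok2: "okl (Ks0 @ [H])" using prefix_replace[OF ok ne K(1)] K(2) by auto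
  have "(Ks0 @ [H]) ! 0 = Ks0 ! 0" using okl_ne[OF K(1)] by (simp add: nth_append)
  then have "RES (Hs' @ [H]) xs (Ks0 @ [H])" unfolding RES_def using ok2 K by (intro exI[of _ r]) auto
  then show ?thesis by blast
qed

lemma C3:
  assumes ok: "okl (Hs' @ [H])" and ne: "Hs' \<noteq> []" and pb: "PB Hs'"
    and hs: "H = Eg hs" "ear (U Hs') hs"
    and ex: "ear (U (Hs' @ [H])) xs" "pe xs \<inter> EU (Hs' @ [H]) = {}"
    and ab: "hd xs \<in> set hs" "last xs \<in> set hs" "hd xs \<noteq> last xs"
  shows "\<exists>Ks. RES (Hs' @ [H]) xs Ks"
proof -
  let ?a = "hd xs" and ?b = "last xs"
  have d: "okl Hs'" "gear H" "edges H \<inter> EU Hs' = {}" using okl_snocD[OF ok ne] by auto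
  have sx: "set xs \<inter> (U Hs' \<union> set hs) = {?a, ?b}" using ex hs unfolding ear_def by simp
  have wx: "wfl xs" using ex unfolding ear_def by simp
  obtain Ks1 r1 where K: "okl Ks1" "U Ks1 = U Hs' \<union> set hs" "EU Ks1 \<subseteq> EU Hs' \<union> pe hs"
    "Ks1 ! 0 = Eg (hs @ r1)" "wfc (hs @ r1)" using pb hs d(3) unfolding PB_def RES_def by auto
  obtain Y where Y: "wfc Y" "Eg Y = Eg (hs @ r1)" "hd Y = ?a" using ROT_TO[OF K(5)] ab by auto
  have K1ne: "Ks1 \<noteq> []" using okl_ne[OF K(1)] .
  have Kd: "Ks1 = Ks1 ! 0 # tl Ks1" using K1ne by (cases Ks1) auto
  have sY: "set Y = set (hs @ r1)" "pe Y = pe (hs @ r1)"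
    using arg_cong[of _ _ verts, OF Y(2)] arg_cong[of _ _ edges, OF Y(2)] by simp_all
  have YU: "set Y \<subseteq> U Ks1" "pe Y \<subseteq> EU Ks1" using Kd K(4) sY
    by (metis U_simps(3) Un_upper1 verts_Eg) (metis EU_simps(3) Un_upper1 edges_Eg K(4) Kd sY(2))
  have Yne: "Y \<noteq> []" using Y unfolding wfc_def by auto
  then have Yc: "Y = ?a # tl Y" using Y(3) by (metis list.collapse)
  have "?b \<in> set Y" using sY ab by auto
  then have "?b \<in> set (tl Y)" using Yc ab by (metis set_ConsD)
  then obtain m w where "tl Y = m @ ?b # w" by (meson split_list)
  then have Ysp: "Y = ?a # m @ ?b # w" using Yc by simp
  have sxY: "set xs \<inter> set Y = {?a, ?b}" using sx YU K(2) ab sY by auto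
  have exY: "pe xs \<inter> pe Y = {}" using YU K(3) ex(2) hs by auto
  obtain As r where As: "okl As" "U As = set Y \<union> set xs" "EU As \<subseteq> pe Y \<union> pe xs"
    "As ! 0 = Eg (xs @ r)" "wfc (xs @ r)" using SC[OF Y(1) Ysp ab(3) wx refl refl sxY exY] by blast
  have ok1: "okl ([Ks1 ! 0] @ tl Ks1)" using K(1) Kd by simp
  have dis: "EU [Ks1 ! 0] \<inter> EU (tl Ks1) = {}" using okl_disj[OF ok1] .
  have UK: "U Ks1 = set Y \<union> U (tl Ks1)" "EU Ks1 = pe Y \<union> EU (tl Ks1)"
    using Kd K(4) sY by (metis U_simps(3) verts_Eg, metis EU_simps(3) edges_Eg)
  have c1: "U [Ks1 ! 0] \<subseteq> U As" using As(2) K(4) sY by simp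
  have c2: "(U As - U [Ks1 ! 0]) \<inter> U (tl Ks1) = {}" using As(2) K(4) sY sx UK(1) K(2) ab by auto
  have c3a: "EU (tl Ks1) \<subseteq> EU Hs' \<union> pe hs" "pe (hs @ r1) \<inter> EU (tl Ks1) = {}" using UK(2) K(3) dis K(4) sY by auto
  have c3b: "pe xs \<inter> (EU Hs' \<union> pe hs) = {}" using ex(2) hs by simp
  have c3: "EU As \<inter> EU (tl Ks1) = {}" using As(3) c3a c3b sY by blast
  have ok2: "okl (As @ tl Ks1)" using prefix_replace[OF ok1 _ As(1) c1 c2 c3] by simp
  have "(As @ tl Ks1) ! 0 = As ! 0" using okl_ne[OF As(1)] by (simp add: nth_append)
  moreover have "U (As @ tl Ks1) = U (Hs' @ [H]) \<union> set xs" using As(2) UK(1) K(2) hs by auto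
  moreover have "EU (As @ tl Ks1) \<subseteq> EU (Hs' @ [H]) \<union> pe xs" using As(3) UK(2) K(3) hs by auto
  ultimately have "RES (Hs' @ [H]) xs (As @ tl Ks1)" unfolding RES_def using ok2 As by (intro exI[of _ r]) auto
  then show ?thesis by blast
qed




lemma C2:
  assumes ok: "okl (Hs' @ [H])" and ne: "Hs' \<noteq> []" and pb: "PB Hs'"
    and hs: "H = Eg hs" "ear (U Hs') hs"
    and ex: "ear (U (Hs' @ [H])) xs" "pe xs \<inter> EU (Hs' @ [H]) = {}"
    and a: "hd xs \<in> set hs" "hd xs \<notin> U Hs'" and b: "last xs \<in> U Hs'" "last xs \<notin> set hs"
    and sp: "hs = u @ hd xs # v" and ev: "even (length u)"
  shows "\<exists>Ks. RES (Hs' @ [H]) xs Ks"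
proof -
  let ?a = "hd xs" and ?b = "last xs" and ?S = "U Hs'"
  have d: "okl Hs'" "gear H" "pe hs \<inter> EU Hs' = {}" using okl_snocD[OF ok ne] hs by auto
  have wh: "wfl hs" and shs: "set hs \<inter> ?S = {hd hs, last hs}" using hs unfolding ear_def by auto
  have wx: "wfl xs" and sx: "set xs \<inter> (?S \<union> set hs) = {?a, ?b}" using ex hs unfolding ear_def by auto
  have ab: "?a \<noteq> ?b" using a b by auto
  have dx: "distinct xs" using wf_distinct[OF wx ab] .
  have xne: "xs \<noteq> []" "4 \<le> length xs" "even (length xs)" using wx unfolding wfl_def by auto
  have une: "u \<noteq> []"
  proof
    assume "u = []" then have "hd hs = ?a" using sp by simp
    then show False using shs a by (metis IntD2 hd_in_set insertI1 list.distinct(1) sp)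
  qed
  have vne: "v \<noteq> []"
  proof
    assume "v = []" then have "last hs = ?a" using sp by simp
    then show False using shs a by (metis IntD2 insert_iff last_in_set list.distinct(1) sp append_is_Nil_conv)
  qed
  have hu: "hd u = hd hs" using sp une by simp
  have lv: "last v = last hs" using sp vne by simp
  have "tl hs = tl u @ ?a # v" using sp une by simp
  then have dtl: "distinct (tl u @ ?a # v)" using wh unfolding wfl_def by simp
  have "butlast hs = u @ ?a # butlast v" using sp vne by (simp add: butlast_append)
  then have dbl: "distinct (u @ ?a # butlast v)" using wh unfolding wfl_def by simp
  have ucons: "hd u # tl u = u" using une by (rule list.collapse)
  have vsnoc: "butlast v @ [last v] = v" using vne by (rule append_butlast_last_id)
  have su: "set u = insert (hd u) (set (tl u))" using arg_cong[of _ _ set, OF ucons] by simp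
  have sv: "set v = insert (last v) (set (butlast v))" using arg_cong[of _ _ set, OF vsnoc] by simp
  have svh: "set u \<subseteq> set hs" "set v \<subseteq> set hs" using sp by auto
  have aU: "?a \<notin> set u" "?a \<notin> set v" using dtl dbl by auto
  have du: "distinct (u @ [?a])" using dbl by simp
  have dv: "distinct (?a # v)" using dtl by simp
  have uS: "set u \<inter> ?S \<subseteq> {hd hs}"
  proof
    fix x assume x: "x \<in> set u \<inter> ?S"
    then have "x = hd hs \<or> x = last hs" using shs svh by blast
    moreover have "x = last hs \<Longrightarrow> x \<notin> set (tl u)" using dtl lv last_in_set[OF vne] by auto
    ultimately show "x \<in> {hd hs}" using x su hu by auto
  qed
  have vS: "set v \<inter> ?S \<subseteq> {last hs}"
  proof
    fix x assume x: "x \<in> set v \<inter> ?S"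
    then have "x = hd hs \<or> x = last hs" using shs svh by blast
    moreover have "x = hd hs \<Longrightarrow> x \<notin> set (butlast v)" using dbl hu hd_in_set[OF une] by auto
    ultimately show "x \<in> {last hs}" using x sv lv by auto
  qed
  have uv: "set u \<inter> set v \<subseteq> {last hs}"
  proof
    fix x assume x: "x \<in> set u \<inter> set v"
    have "x \<notin> set (tl u)" using dtl x by auto
    then have "x = hd hs" using x su hu by auto
    then have "x \<notin> set (butlast v)" using dbl hu hd_in_set[OF une] by auto
    then show "x \<in> {last hs}" using x sv lv by auto
  qed
  have xu1: "set xs \<inter> set u = {}"
  proof -
    { fix x assume x: "x \<in> set xs" "x \<in> set u"
      then have "x \<in> {hd xs, last xs}" using sx svh by blast
      then have False using aU b svh x by auto }
    then show ?thesis by blast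
  qed
  have xu2: "set xs \<inter> set v = {}"
  proof -
    { fix x assume x: "x \<in> set xs" "x \<in> set v"
      then have "x \<in> {hd xs, last xs}" using sx svh by blast
      then have False using aU b svh x by auto }
    then show ?thesis by blast
  qed
  note xu = xu1 xu2
  let ?X = "u @ xs"
  have "distinct (tl u @ xs)" using dtl dx xu(1) su by auto
  then have d1: "distinct (tl ?X)" using une by simp
  have "distinct (u @ butlast xs)" using du dx xu(1) by (auto simp: distinct_butlast dest: in_set_butlastD)
  then have d2: "distinct (butlast ?X)" using xne by (simp add: butlast_append)
  have wX: "wfl ?X" unfolding wfl_def using d1 d2 xne ev by simp
  have "set ?X \<inter> ?S = {hd ?X, last ?X}"
  proof
    have xS: "set xs \<inter> ?S \<subseteq> {?b}"
    proof
      fix x assume x: "x \<in> set xs \<inter> ?S"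
      then have "x \<in> set xs \<inter> (?S \<union> set hs)" by simp
      then have "x \<in> {?a, ?b}" using equalityD1[OF sx] by (rule subsetD[rotated])
      then show "x \<in> {?b}" using x a(2) by auto
    qed
    have hX: "hd ?X = hd hs" "last ?X = ?b" using une hu xne by simp_all
    show "set ?X \<inter> ?S \<subseteq> {hd ?X, last ?X}" unfolding hX set_append using uS xS by blast
    have "hd hs \<in> ?S" "hd hs \<in> set u" using shs hu hd_in_set[OF une] by auto
    then show "{hd ?X, last ?X} \<subseteq> set ?X \<inter> ?S" unfolding hX set_append using b xne by auto
  qed
  then have eX: "ear ?S ?X" using wX unfolding ear_def by simp
  have peX: "pe ?X = pe (u @ [?a]) \<union> pe xs" using pe_append[OF une xne(1)] pe_append[of u "[?a]"] une by auto
  have "hs = (u @ [?a]) @ v" using sp by simp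
  then have pehs: "pe hs = pe (u @ [?a]) \<union> pe (?a # v)" using pe_append[of "u @ [?a]" v] vne pe_Cons[OF vne, of ?a] by auto
  have "card (pe hs) = length hs - 1" using card_pe_wf[OF wh] .
  also have "\<dots> = card (pe (u @ [?a])) + card (pe (?a # v))" using card_pe[OF du] card_pe[OF dv] sp by simp
  finally have "card (pe (u @ [?a]) \<union> pe (?a # v)) = card (pe (u @ [?a])) + card (pe (?a # v))" using pehs by simp
  then have disuv: "pe (u @ [?a]) \<inter> pe (?a # v) = {}" using disj_by_card[OF pe_finite pe_finite] by blast
  have exs: "pe xs \<inter> EU Hs' = {}" "pe xs \<inter> pe hs = {}" using ex(2) hs by auto
  have exX: "pe ?X \<inter> EU Hs' = {}" using peX pehs d(3) exs by blast
  obtain Ks0 r0 where K: "okl Ks0" "U Ks0 = ?S \<union> set ?X" "EU Ks0 \<subseteq> EU Hs' \<union> pe ?X"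
    "Ks0 ! 0 = Eg (?X @ r0)" "wfc (?X @ r0)" using pb eX exX unfolding PB_def RES_def by blast
  have "wfc (u @ (xs @ r0))" using K(5) by simp
  then have R: "wfc ((xs @ r0) @ tl u @ [?a]) \<and> Eg ((xs @ r0) @ tl u @ [?a]) = Eg (u @ (xs @ r0))"
    using Rot[of u "xs @ r0"] une xne by simp
  have K0: "Ks0 ! 0 = Eg (xs @ (r0 @ tl u @ [?a]))" "wfc (xs @ (r0 @ tl u @ [?a]))" using R K(4) by simp_all
  have lhs: "length u + length v = length hs - 1" using sp by simp
  have "even (length hs)" "4 \<le> length hs" using wh unfolding wfl_def by auto
  then have ov: "odd (length v)" using ev lhs by presburger
  have lhsS: "last hs \<in> ?S" using shs by auto
  have shs2: "set hs = set u \<union> {?a} \<union> set v" using sp by simp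
  have UH: "U (Hs' @ [H]) = ?S \<union> set hs" "EU (Hs' @ [H]) = EU Hs' \<union> pe hs" using hs by simp_all
  have axs: "?a \<in> set xs" using xne by simp
  show ?thesis
  proof (cases "length v = 1")
    case True
    then have "v = [last hs]" using lv vne by (cases v) auto
    then have "U Ks0 = U (Hs' @ [H]) \<union> set xs" using K(2) UH shs2 lhsS axs by auto
    moreover have "EU Ks0 \<subseteq> EU (Hs' @ [H]) \<union> pe xs" using K(3) peX pehs UH by blast
    ultimately have "RES (Hs' @ [H]) xs Ks0" unfolding RES_def using K K0 by (intro exI[of _ "r0 @ tl u @ [?a]"]) auto
    then show ?thesis by blast
  next
    case False
    let ?L = "?a # v"
    have "length v \<ge> 3" using False ov vne by (simp; presburger)
    then have wL: "wfl ?L" unfolding wfl_def using ov dv dbl by (simp add: distinct_butlast)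
    have "set ?L \<inter> U Ks0 = {hd ?L, last ?L}"
    proof
      show "set ?L \<inter> U Ks0 \<subseteq> {hd ?L, last ?L}" using K(2) vS uv xu lv vne by auto
      show "{hd ?L, last ?L} \<subseteq> set ?L \<inter> U Ks0" using K(2) lv vne lhsS axs last_in_set[OF vne] by auto
    qed
    then have eL: "ear (U Ks0) ?L" using wL unfolding ear_def by simp
    have "pe ?L \<inter> EU Ks0 = {}" using K(3) peX pehs disuv d(3) exs by blast
    then have ok2: "okl (Ks0 @ [Eg ?L])" using ear_snoc[OF K(1) eL] by simp
    have "(Ks0 @ [Eg ?L]) ! 0 = Ks0 ! 0" using okl_ne[OF K(1)] by (simp add: nth_append)
    moreover have "U (Ks0 @ [Eg ?L]) = U (Hs' @ [H]) \<union> set xs" using K(2) UH shs2 axs by auto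
    moreover have "EU (Ks0 @ [Eg ?L]) \<subseteq> EU (Hs' @ [H]) \<union> pe xs" using K(3) peX pehs UH by auto
    ultimately have "RES (Hs' @ [H]) xs (Ks0 @ [Eg ?L])" unfolding RES_def using ok2 K0 by (intro exI[of _ "r0 @ tl u @ [?a]"]) auto
    then show ?thesis by blast
  qed
qed




lemma C2':
  assumes ok: "okl (Hs' @ [H])" and ne: "Hs' \<noteq> []" and pb: "PB Hs'"
    and hs: "H = Eg hs" "ear (U Hs') hs"
    and ex: "ear (U (Hs' @ [H])) xs" "pe xs \<inter> EU (Hs' @ [H]) = {}"
    and a: "hd xs \<in> set hs" "hd xs \<notin> U Hs'" and b: "last xs \<in> U Hs'" "last xs \<notin> set hs"
  shows "\<exists>Ks. RES (Hs' @ [H]) xs Ks"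
proof -
  obtain u v where sp: "hs = u @ hd xs # v" using a(1) by (meson split_list)
  show ?thesis
  proof (cases "even (length u)")
    case True
    then show ?thesis using C2[OF ok ne pb hs ex a b sp] by blast
  next
    case False
    have "even (length hs)" using hs(2) unfolding ear_def wfl_def by simp
    then have ev: "even (length (rev v))" using sp False by simp
    have sp': "rev hs = rev v @ hd xs # rev u" using sp by simp
    have hs': "H = Eg (rev hs)" "ear (U Hs') (rev hs)" using hs ear_rev[OF hs(2) ear_ne[OF hs(2)]] by simp_all
    have r: "hd xs \<in> set (rev hs)" "last xs \<notin> set (rev hs)" using a b by simp_all
    show ?thesis using C2[OF ok ne pb hs' ex r(1) a(2) b(1) r(2) sp' ev] by simp
  qed
qed

lemma L_B:
  assumes ok: "okl (Hs' @ [H])" and ne: "Hs' \<noteq> []" and pa: "PA Hs'" and pb: "PB Hs'"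
  shows "PB (Hs' @ [H])"
  unfolding PB_def
proof (intro allI impI)
  have pa2: "PA (Hs' @ [H])" using L_A[OF ok ne pa pb] .
  have d: "okl Hs'" "gear H" "edges H \<inter> EU Hs' = {}" "att (U Hs') H" using okl_snocD[OF ok ne] by auto
  obtain hs where hs: "H = Eg hs" "ear (U Hs') hs" using att_ear[OF d(2) d(4)] by blast
  fix xs assume e: "ear (U (Hs' @ [H])) xs" and ex: "pe xs \<inter> EU (Hs' @ [H]) = {}"
  show "\<exists>Ks. RES (Hs' @ [H]) xs Ks"
  proof (cases "hd xs = last xs")
    case True then show ?thesis using C0[OF ok pa2 e True ex] by blast
  next
    case nc: False
    have sx: "set xs \<inter> (U Hs' \<union> set hs) = {hd xs, last xs}" using e hs unfolding ear_def by simp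
    have xne: "xs \<noteq> []" using ear_ne[OF e] .
    have ain: "hd xs \<in> U Hs' \<union> set hs" "last xs \<in> U Hs' \<union> set hs" using sx by auto
    show ?thesis
    proof (cases "hd xs \<in> U Hs' \<and> last xs \<in> U Hs'")
      case True then show ?thesis using C1[OF ok ne pb hs e ex] by blast
    next
      case F1: False
      show ?thesis
      proof (cases "hd xs \<in> set hs \<and> last xs \<in> set hs")
        case True then show ?thesis using C3[OF ok ne pb hs e ex _ _ nc] by blast
      next
        case F2: False
        show ?thesis
        proof (cases "hd xs \<in> U Hs'")
          case False
          then have "hd xs \<in> set hs" "last xs \<notin> set hs" "last xs \<in> U Hs'" using ain F2 by auto
          then show ?thesis using C2'[OF ok ne pb hs e ex _ False] by blast
        next
          case True
          then have c: "last xs \<notin> U Hs'" "last xs \<in> set hs" "hd xs \<notin> set hs" using F1 ain F2 by auto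
          have e': "ear (U (Hs' @ [H])) (rev xs)" using ear_rev[OF e xne] .
          have ex': "pe (rev xs) \<inter> EU (Hs' @ [H]) = {}" using ex by simp
          have "hd (rev xs) \<in> set hs" "hd (rev xs) \<notin> U Hs'" "last (rev xs) \<in> U Hs'" "last (rev xs) \<notin> set hs"
            using c True xne by (simp_all add: hd_rev last_rev)
          then obtain Ks where "RES (Hs' @ [H]) (rev xs) Ks" using C2'[OF ok ne pb hs e' ex'] by blast
          then show ?thesis using RES_rev[OF _ xne nc] by blast
        qed
      qed
    qed
  qed
qed

lemma main: "okl Hs \<Longrightarrow> PA Hs \<and> PB Hs"
proof (induction Hs rule: rev_induct)
  case Nil then show ?case using okl_ne by blast
next
  case (snoc H Hs')
  show ?case
  proof (cases "Hs' = []")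
    case True
    then have "gear H" "is_cycle H" using okl_hd[OF snoc.prems] by simp_all
    then show ?thesis using base True by simp
  next
    case False
    have "okl Hs'" using okl_prefix[OF snoc.prems False] .
    then have "PA Hs'" "PB Hs'" using snoc.IH by auto
    then show ?thesis using L_A[OF snoc.prems False] L_B[OF snoc.prems False] by simp
  qed
qed




lemma prev_verts_U: "k \<le> length Hs \<Longrightarrow> prev_verts Hs k = U (take k Hs)"
proof -
  assume k: "k \<le> length Hs"
  have "U (take k Hs) = \<Union> (verts ` ((!) Hs ` {0..<k}))" unfolding U_def nth_image[OF k] ..
  also have "\<dots> = (\<Union>j<k. verts (Hs ! j))" by (simp add: image_image atLeast0LessThan)
  finally show ?thesis unfolding prev_verts_def by simp
qed

lemma EU_take: "k \<le> length Hs \<Longrightarrow> EU (take k Hs) = (\<Union>j<k. edges (Hs ! j))"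
proof -
  assume k: "k \<le> length Hs"
  have "EU (take k Hs) = \<Union> (edges ` ((!) Hs ` {0..<k}))" unfolding EU_def nth_image[OF k] ..
  also have "\<dots> = (\<Union>j<k. edges (Hs ! j))" by (simp add: image_image atLeast0LessThan)
  finally show ?thesis .
qed

lemma oed_okl:
  assumes oed: "odd_ear_decomposition G Hs"
  shows "1 \<le> k \<Longrightarrow> k \<le> length Hs \<Longrightarrow> okl (take k Hs)"
proof (induction k)
  case 0 then show ?case by simp
next
  case (Suc k)
  have len: "0 < length Hs" using oed unfolding odd_ear_decomposition_def by simp
  have gk: "gear (Hs ! k)" using oed Suc.prems unfolding odd_ear_decomposition_def gear_def subgraph_def by auto
  show ?case
  proof (cases "k = 0")
    case True
    have "is_cycle (Hs ! 0)" using oed unfolding odd_ear_decomposition_def by simp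
    then show ?thesis using okl.one[OF gk[unfolded True]] True len by (simp add: take_Suc_conv_app_nth)
  next
    case False
    have ih: "okl (take k Hs)" using Suc False by simp
    have D: "\<forall>i<length Hs. \<forall>j<length Hs. i \<noteq> j \<longrightarrow> edges (Hs ! i) \<inter> edges (Hs ! j) = {}"
      using oed unfolding odd_ear_decomposition_def by simp
    have "\<forall>j<k. edges (Hs ! k) \<inter> edges (Hs ! j) = {}"
    proof (intro allI impI)
      fix j assume "j < k"
      then show "edges (Hs ! k) \<inter> edges (Hs ! j) = {}" using D Suc.prems by simp
    qed
    then have "edges (Hs ! k) \<inter> EU (take k Hs) = {}"
      using EU_take[of k Hs] Suc.prems by auto
    moreover have "att (U (take k Hs)) (Hs ! k)"
    proof -
      have E4: "\<forall>i. 1 \<le> i \<and> i < length Hs \<longrightarrow>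
        (\<exists>xs. is_path_on (Hs ! i) xs \<and> verts (Hs ! i) \<inter> prev_verts Hs i = {hd xs, last xs}) \<or>
        (is_cycle (Hs ! i) \<and> card (verts (Hs ! i) \<inter> prev_verts Hs i) = 1)"
        using oed unfolding odd_ear_decomposition_def by blast
      have "1 \<le> k \<and> k < length Hs" using Suc.prems False by simp
      then have "att (prev_verts Hs k) (Hs ! k)" using E4 unfolding att_def by blast
      then show ?thesis using prev_verts_U[of k Hs] Suc.prems by simp
    qed
    ultimately show ?thesis using okl.snoc[OF ih gk] Suc.prems by (simp add: take_Suc_conv_app_nth)
  qed
qed

lemma okl_oed:
  assumes ok: "okl Ks" and sub: "\<forall>K\<in>set Ks. verts K \<subseteq> verts G \<and> edges K \<subseteq> edges G"
    and UG: "U Ks = verts G"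
  shows "odd_ear_decomposition G Ks"
proof -
  have ne: "Ks \<noteq> []" using okl_ne[OF ok] .
  have g: "\<forall>i<length Ks. gear (Ks ! i)" using okl_gear[OF ok] by auto
  have dj: "\<forall>i<length Ks. \<forall>j<length Ks. i \<noteq> j \<longrightarrow> edges (Ks ! i) \<inter> edges (Ks ! j) = {}"
  proof (intro allI impI)
    fix i j assume ij: "i < length Ks" "j < length Ks" "i \<noteq> j"
    have gen: "edges (Ks ! p) \<inter> edges (Ks ! q) = {}" if pq: "p < q" "q < length Ks" for p q
    proof -
      have "okl (take q Ks @ drop q Ks)" using ok by simp
      then have "EU (take q Ks) \<inter> EU (drop q Ks) = {}" by (rule okl_disj)
      moreover have "edges (Ks ! p) \<subseteq> EU (take q Ks)" using pq EU_take[of q Ks] by auto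
      moreover have "edges (Ks ! q) \<subseteq> EU (drop q Ks)" using pq
        by (auto simp: EU_def) (metis Cons_nth_drop_Suc list.set_intros(1))
      ultimately show ?thesis by blast
    qed
    show "edges (Ks ! i) \<inter> edges (Ks ! j) = {}"
    proof (cases "i < j")
      case True then show ?thesis using gen ij by blast
    next
      case False then have "j < i" using ij by simp
      then show ?thesis using gen[of j i] ij by blast
    qed
  qed
  have at: "\<forall>i. 1 \<le> i \<and> i < length Ks \<longrightarrow> att (prev_verts Ks i) (Ks ! i)"
  proof (intro allI impI)
    fix i assume i: "1 \<le> i \<and> i < length Ks"
    have "okl (take (Suc i) Ks @ drop (Suc i) Ks)" using ok by simp
    then have "okl (take (Suc i) Ks)" using okl_prefix[of "take (Suc i) Ks" "drop (Suc i) Ks"] i ne by simp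
    then have "okl (take i Ks @ [Ks ! i])" using i by (simp add: take_Suc_conv_app_nth)
    moreover have "take i Ks \<noteq> []" using i ne by simp
    ultimately have "att (U (take i Ks)) (Ks ! i)" using okl_snocD by blast
    then show "att (prev_verts Ks i) (Ks ! i)" using prev_verts_U[of i Ks] i by simp
  qed
  have "verts G = (\<Union>i<length Ks. verts (Ks ! i))"
    using UG prev_verts_U[of "length Ks" Ks] unfolding prev_verts_def by simp
  moreover have "\<forall>i<length Ks. subgraph (Ks ! i) G" using sub g unfolding subgraph_def gear_def by auto
  moreover have "is_cycle (Ks ! 0)" using okl_hd[OF ok] by simp
  ultimately show ?thesis unfolding odd_ear_decomposition_def
  proof (intro conjI)
    show "Ks \<noteq> []" using ne .
    show "\<forall>i<length Ks. odd (card (edges (Ks ! i))) \<and> 3 \<le> card (edges (Ks ! i))"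
      using g unfolding gear_def by blast
    show "\<forall>i. 1 \<le> i \<and> i < length Ks \<longrightarrow>
        (\<exists>xs. is_path_on (Ks ! i) xs \<and> verts (Ks ! i) \<inter> prev_verts Ks i = {hd xs, last xs}) \<or>
        (is_cycle (Ks ! i) \<and> card (verts (Ks ! i) \<inter> prev_verts Ks i) = 1)"
      using at unfolding att_def by blast
  qed (use dj in auto)
qed




theorem lemma3p1:
  fixes G :: "'a graph" and Hs :: "'a graph list" and l :: nat
  assumes "graph G"
    and "hypomatchable G"
    and "card (verts G) \<ge> 3"
    and "lex_max_oed G Hs"
    and "card (verts (Hs ! 0)) = 2 * l + 1"
  shows "\<forall>i. 1 \<le> i \<and> i < length Hs \<longrightarrow>
           card (verts (Hs ! i) - prev_verts Hs i) \<le> 2 * l"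
proof (intro allI impI, rule ccontr)
  fix i assume i: "1 \<le> i \<and> i < length Hs" and nle: "\<not> card (verts (Hs ! i) - prev_verts Hs i) \<le> 2 * l"
  have oed: "odd_ear_decomposition G Hs" and mx: "\<And>Ks. odd_ear_decomposition G Ks \<Longrightarrow>
      (vert_seq Hs, vert_seq Ks) \<notin> lexord {(a, b). a < b}"
    using assms(4) unfolding lex_max_oed_def by auto
  have Hsne: "Hs \<noteq> []" using i by auto
  let ?Hp = "take i Hs" and ?H = "Hs ! i"
  have okS: "okl (take (Suc i) Hs)" using oed_okl[OF oed, of "Suc i"] i by simp
  then have okS': "okl (?Hp @ [?H])" using i by (simp add: take_Suc_conv_app_nth)
  have Hpne: "?Hp \<noteq> []" using i Hsne by simp
  have okHp: "okl ?Hp" using okl_prefix[OF okS' Hpne] .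
  have pb: "PB ?Hp" using main[OF okHp] by simp
  have d: "gear ?H" "edges ?H \<inter> EU ?Hp = {}" "att (U ?Hp) ?H" using okl_snocD[OF okS' Hpne] by auto
  obtain hs where hs: "?H = Eg hs" "ear (U ?Hp) hs" using att_ear[OF d(1) d(3)] by blast
  have "pe hs \<inter> EU ?Hp = {}" using d(2) hs by simp
  then obtain Ks' r where K: "okl Ks'" "U Ks' = U ?Hp \<union> set hs" "EU Ks' \<subseteq> EU ?Hp \<union> pe hs"
    "Ks' ! 0 = Eg (hs @ r)" using pb hs(2) unfolding PB_def RES_def by blast
  have Q: "verts ?H - prev_verts Hs i = set hs - U ?Hp" using hs prev_verts_U[of i Hs] i by simp
  have "hd hs \<in> set hs \<inter> U ?Hp" using hs(2) unfolding ear_def by auto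
  then have "set hs - U ?Hp \<subset> set hs" by blast
  then have "card (set hs - U ?Hp) < card (set hs)" by (simp add: psubset_card_mono)
  also have "\<dots> \<le> card (set (hs @ r))" by (simp add: card_mono)
  finally have big: "card (verts (Ks' ! 0)) > 2 * l + 1" using K(4) Q nle by simp
  have okHs: "okl Hs" using oed_okl[OF oed, of "length Hs"] i by simp
  let ?T = "take (Suc i) Hs" and ?D = "drop (Suc i) Hs"
  have okTD: "okl (?T @ ?D)" using okHs by simp
  have Tne: "?T \<noteq> []" using Hsne by simp
  have UT: "U ?T = U Ks'" "EU ?T = EU ?Hp \<union> pe hs"
    using K(2) hs i by (simp_all add: take_Suc_conv_app_nth)
  have "EU Ks' \<inter> EU ?D = {}" using okl_disj[OF okTD] K(3) UT(2) by blast
  then have okK: "okl (Ks' @ ?D)" using prefix_replace[OF okTD Tne K(1)] UT(1) by simp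
  have UHs: "U Hs = verts G"
    using oed prev_verts_U[of "length Hs" Hs] unfolding odd_ear_decomposition_def prev_verts_def by simp
  have UK: "U (Ks' @ ?D) = verts G" using UT(1) UHs
    by (metis U_simps(2) append_take_drop_id)
  have EUHs: "EU Hs \<subseteq> edges G"
  proof -
    have "\<forall>K\<in>set Hs. edges K \<subseteq> edges G" using oed unfolding odd_ear_decomposition_def subgraph_def
      by (metis in_set_conv_nth)
    then show ?thesis unfolding EU_def by blast
  qed
  have "EU (Ks' @ ?D) \<subseteq> EU Hs"
  proof -
    have "EU Hs = EU ?T \<union> EU ?D" by (metis EU_simps(2) append_take_drop_id)
    then show ?thesis using K(3) UT(2) by auto
  qed
  then have sub: "\<forall>K\<in>set (Ks' @ ?D). verts K \<subseteq> verts G \<and> edges K \<subseteq> edges G"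
    using UK EUHs unfolding U_def EU_def by blast
  have oedK: "odd_ear_decomposition G (Ks' @ ?D)" using okl_oed[OF okK sub UK] .
  have Ksne: "Ks' \<noteq> []" using okl_ne[OF K(1)] .
  have v1: "vert_seq Hs = card (verts (Hs ! 0)) # vert_seq (tl Hs)"
    using Hsne by (cases Hs) (simp_all add: vert_seq_def)
  have v2: "vert_seq (Ks' @ ?D) = card (verts (Ks' ! 0)) # vert_seq (tl Ks' @ ?D)"
    using Ksne by (cases Ks') (simp_all add: vert_seq_def)
  have "(vert_seq Hs, vert_seq (Ks' @ ?D)) \<in> lexord {(a, b). a < b}"
    unfolding v1 v2 using big assms(5) by simp
  then show False using mx[OF oedK] by blast
qed


end
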